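(* Let $t\ge2$, $\sigma\in S_t$, and let $p=\mathrm{red}(\sigma_1\cdots\sigma_{t-1})\in S_{t-1}$. Let $\vec v\in\mathbb{N}^{t}$ be the vector with $v_{\sigma_t}=1$ and $v_i=0$ for $i\ne\sigma_t$. Then $\vec v$ is a gap vector for the prefix $p$ with respect to $\{(\sigma,[t-2])\}$, and the set $\{1\}$ is reversibly deletable for $p$ with respect to $\{(\sigma,[t-2])\}$.
   Context: $\mathrm{red}(w)$ replaces the $i$-th smallest letter of a word of distinct integers by $i$. A vincular pattern $(\sigma,X)$, $\sigma\in S_\ell$, $X\subseteq[\ell-1]$, is contained in $\pi$ if there are $i_1<\dots<i_\ell$ with $\mathrm{red}(\pi_{i_1}\cdots\pi_{i_\ell})=\sigma$ and $i_{x+1}=i_x+1$ for $x\in X$; $(\sigma,[t-2])$ is the pattern $\sigma_1\cdots\sigma_{t-1}\text{-}\sigma_t$. For $p\in S_k$ and $w\in[n]^k$ with distinct letters and $\mathrm{red}(w)=p$, $S_n^B(p;w)$ is the set of $B$-avoiding $\pi\in S_n$ with $\pi_i=w_i$ ($i\le k$). The spacing vector $\vec g(n,w)\in\mathbb{N}^{k+1}$ has $i$-th component $c_i-c_{i-1}-1$, with $c_i$ the $i$-th smallest letter of $w$, $c_0=0$, $c_{k+1}=n+1$. $\vec v$ is a gap vector for $p$ w.r.t. $B$ if $S_n^B(p;w)=\emptyset$ for all $n$ and all such $w$ with $\vec g(n,w)\ge\vec v$ componentwise. $d_R$ deletes entries in positions $R$ and reduces (for words: subtract from each remaining letter the number of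 deleted letters smaller than it). $R$ is reversibly deletable for $p$ w.r.t. $B$ if for all $n$ and all such $w$ with $S_n^B(p;w)\ne\emptyset$, $d_R$ is a bijection $S_n^B(p;w)\to S_{n-|R|}^B(d_R(p);d_R(w))$. *)

theory Defs
  imports Main
begin

text \<open>Words and permutations are lists of positive naturals; positions are 1-based
in the paper, 0-based list indices here (converted explicitly).\<close>

definition red :: "nat list \<Rightarrow> nat list" where
  "red w = map (\<lambda>x. card {y \<in> set w. y \<le> x}) w"

definition is_perm :: "nat \<Rightarrow> nat list \<Rightarrow> bool" where
  "is_perm n \<pi> \<longleftrightarrow> length \<pi> = n \<and> distinct \<pi> \<and> set \<pi> = {1..n}"

text \<open>Vincular pattern (sigma, X): X \<subseteq> {1..l-1}; x \<in> X forces i_(x+1) = i_x + 1.\<close>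
definition contains_vinc :: "nat list \<Rightarrow> nat list \<times> nat set \<Rightarrow> bool" where
  "contains_vinc \<pi> P \<longleftrightarrow> (case P of (\<sigma>, X) \<Rightarrow>
     (\<exists>is. length is = length \<sigma> \<and> sorted_wrt (<) is \<and> (\<forall>i\<in>set is. i < length \<pi>) \<and>
        red (map (\<lambda>i. \<pi> ! i) is) = \<sigma> \<and>
        (\<forall>x\<in>X. is ! x = is ! (x - 1) + 1)))"

definition avoids :: "(nat list \<times> nat set) set \<Rightarrow> nat list \<Rightarrow> bool" where
  "avoids B \<pi> \<longleftrightarrow> (\<forall>P\<in>B. \<not> contains_vinc \<pi> P)"

definition adm_word :: "nat \<Rightarrow> nat list \<Rightarrow> nat list \<Rightarrow> bool" where
  "adm_word n p w \<longleftrightarrow> length w = length p \<and> distinct w \<and> set w \<subseteq> {1..n} \<and> red w = p"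

definition SnB :: "nat \<Rightarrow> (nat list \<times> nat set) set \<Rightarrow> nat list \<Rightarrow> nat list \<Rightarrow> nat list set" where
  "SnB n B p w = {\<pi>. is_perm n \<pi> \<and> avoids B \<pi> \<and> (\<forall>i<length w. \<pi> ! i = w ! i)}"

text \<open>Spacing vector g(n,w), a list of length k+1 (component i+1 of the paper is entry i).\<close>
definition spacing :: "nat \<Rightarrow> nat list \<Rightarrow> nat list" where
  "spacing n w = (let c = 0 # sort w @ [n + 1] in
      map (\<lambda>i. c ! (i + 1) - c ! i - 1) [0..<length w + 1])"

definition gap_vector :: "nat list \<Rightarrow> nat list \<Rightarrow> (nat list \<times> nat set) set \<Rightarrow> bool" where
  "gap_vector v p B \<longleftrightarrow> length v = length p + 1 \<and>
     (\<forall>n w. adm_word n p w \<and> (\<forall>i < length p + 1. v ! i \<le> spacing n w ! i) \<longrightarrow> SnB n B p w = {})"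

text \<open>d_R: delete entries at (1-based) positions in R, subtract from remaining letters the
number of deleted letters smaller than them (this is reduction for permutations).\<close>
definition dR :: "nat set \<Rightarrow> nat list \<Rightarrow> nat list" where
  "dR R w = (let del = [w ! i. i \<leftarrow> [0..<length w], i + 1 \<in> R];
                 keep = [w ! i. i \<leftarrow> [0..<length w], i + 1 \<notin> R]
             in map (\<lambda>x. x - length (filter (\<lambda>y. y < x) del)) keep)"

definition rev_deletable :: "nat set \<Rightarrow> nat list \<Rightarrow> (nat list \<times> nat set) set \<Rightarrow> bool" where
  "rev_deletable R p B \<longleftrightarrow>
     (\<forall>n w. adm_word n p w \<and> SnB n B p w \<noteq> {} \<longrightarrow>
        bij_betw (dR R) (SnB n B p w) (SnB (n - card R) B (dR R p) (dR R w)))"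

end

theory Submission
  imports Defs
begin


lemma perm_iff: "is_perm n l \<longleftrightarrow> length l = n \<and> distinct l \<and> set l \<subseteq> {1..n}"
proof
  assume "length l = n \<and> distinct l \<and> set l \<subseteq> {1..n}"
  then show "is_perm n l" unfolding is_perm_def
    using card_subset_eq[of "{1..n}" "set l"] distinct_card[of l] by auto
qed (auto simp: is_perm_def)

lemma card_ins_filter: "finite S \<Longrightarrow> x \<notin> S \<Longrightarrow>
  card {y \<in> insert x S. P y} = card {y\<in>S. P y} + (if P x then 1 else 0)"
proof -
  assume f: "finite S" and x: "x \<notin> S"
  show ?thesis
  proof (cases "P x")
    case True
    then have "{y \<in> insert x S. P y} = insert x {y\<in>S. P y}" by auto
    then show ?thesis using f x True by simp
  next
    case False
    then have "{y \<in> insert x S. P y} = {y\<in>S. P y}" by auto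
    then show ?thesis using False by simp
  qed
qed

lemma rank_cmp: "finite S \<Longrightarrow> x \<notin> S \<Longrightarrow> a \<in> S \<Longrightarrow>
   (x < a) = (card {y\<in>S. y<x} < card {y\<in>S. y \<le> (a::nat)})"
proof -
  assume f: "finite S" and x: "x \<notin> S" and a: "a \<in> S"
  show ?thesis
  proof (cases "x < a")
    case True
    then have "{y\<in>S. y<x} \<subset> {y\<in>S. y \<le> a}"
    proof (intro psubsetI)
      show "{y\<in>S. y<x} \<subseteq> {y\<in>S. y \<le> a}" using True by auto
      show "{y\<in>S. y<x} \<noteq> {y\<in>S. y \<le> a}"
      proof
        assume eq: "{y\<in>S. y<x} = {y\<in>S. y \<le> a}"
        have "a \<in> {y\<in>S. y \<le> a}" using a by simp
        then have "a \<in> {y\<in>S. y<x}" using eq by simp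
        then show False using True by simp
      qed
    qed
    then have "card {y\<in>S. y<x} < card {y\<in>S. y \<le> a}"
      by (rule psubset_card_mono[rotated]) (use f in simp)
    then show ?thesis using True by blast
  next
    case False
    have "a \<noteq> x" using x a by blast
    then have "a < x" using False by linarith
    then have "{y\<in>S. y \<le> a} \<subseteq> {y\<in>S. y<x}" by auto
    then have "card {y\<in>S. y \<le> a} \<le> card {y\<in>S. y<x}"
      by (rule card_mono[rotated]) (use f in simp)
    then show ?thesis using False by linarith
  qed
qed

lemma length_red[simp]: "length (red w) = length w" by (simp add: red_def)
lemma red_nth: "i < length w \<Longrightarrow> red w ! i = card {y\<in>set w. y \<le> w!i}" by (simp add: red_def)

lemma perm_card_le: "is_perm t \<sigma> \<Longrightarrow> i < t \<Longrightarrow> card {y\<in>set \<sigma>. y \<le> \<sigma>!i} = \<sigma>!i"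
proof -
  assume p: "is_perm t \<sigma>" and i: "i < t"
  then have "\<sigma>!i \<in> {1..t}" unfolding is_perm_def using nth_mem by blast
  moreover have "{y\<in>set \<sigma>. y \<le> \<sigma>!i} = {1..\<sigma>!i}" using p calculation unfolding is_perm_def by auto
  ultimately show ?thesis by simp
qed

lemma red_snoc_last:
  assumes "x \<notin> set w"
  shows "red (w @ [x]) ! length w = card {y\<in>set w. y < x} + 1"
proof -
  have "red (w @ [x]) ! length w = card {y \<in> insert x (set w). y \<le> x}"
    by (simp add: red_def nth_append)
  also have "\<dots> = card {y\<in>set w. y \<le> x} + 1" using card_ins_filter[of "set w" x] assms by simp
  also have "{y\<in>set w. y \<le> x} = {y\<in>set w. y < x}" using assms by (auto simp: le_less)
  finally show ?thesis .
qed

lemma red_snoc: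
  assumes t: "t \<ge> 2" and p: "is_perm t \<sigma>" and len: "length w = t - 1"
    and rw: "red w = red (take (t-1) \<sigma>)" and x: "x \<notin> set w"
    and r: "card {y\<in>set w. y < x} = \<sigma>!(t-1) - 1"
  shows "red (w @ [x]) = \<sigma>"
proof (rule nth_equalityI)
  have ls: "length \<sigma> = t" using p by (simp add: is_perm_def)
  show "length (red (w @ [x])) = length \<sigma>" using ls len t by simp
  define \<tau> where "\<tau> = take (t-1) \<sigma>"
  define k where "k = \<sigma>!(t-1)"
  have sd: "\<sigma> = \<tau> @ [k]" unfolding \<tau>_def k_def using ls t
    using take_Suc_conv_app_nth[of "t-1" \<sigma>] by (simp add: Suc_diff_1)
  have dist: "distinct \<sigma>" using p by (simp add: is_perm_def)
  have kt: "k \<notin> set \<tau>" using dist sd by auto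
  have kr: "k \<in> {1..t}" using p ls t unfolding k_def is_perm_def using nth_mem[of "t-1" \<sigma>] by simp
  have lt: "length \<tau> = t - 1" unfolding \<tau>_def using ls by simp
  have ck: "card {y\<in>set \<tau>. y < k} = k - 1"
  proof -
    have "{y\<in>set \<tau>. y < k} = {1..<k}" using p sd kr unfolding is_perm_def by auto
    then show ?thesis by simp
  qed
  fix i assume "i < length (red (w @ [x]))"
  then have i: "i < t" using len t by simp
  show "red (w @ [x]) ! i = \<sigma> ! i"
  proof (cases "i = t - 1")
    case True
    then show ?thesis using red_snoc_last[OF x] r len kr k_def by simp
  next
    case False
    then have i': "i < t - 1" using i by simp
    have wi: "w!i \<in> set w" using i' len by simp
    have ti: "\<tau>!i \<in> set \<tau>" using i' lt by simp
    have eqr: "card {y\<in>set w. y \<le> w!i} = card {y\<in>set \<tau>. y \<le> \<tau>!i}"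
    proof -
      have "red w ! i = red \<tau> ! i" using rw \<tau>_def by simp
      then show ?thesis using red_nth[of i w] red_nth[of i \<tau>] i' len lt by simp
    qed
    have "red (w @ [x]) ! i = card {y \<in> insert x (set w). y \<le> w!i}"
      using i' len by (simp add: red_def nth_append)
    also have "\<dots> = card {y\<in>set w. y \<le> w!i} + (if x \<le> w!i then 1 else 0)"
      using card_ins_filter[of "set w" x] x by simp
    also have "\<dots> = card {y\<in>set \<tau>. y \<le> \<tau>!i} + (if k \<le> \<tau>!i then 1 else 0)"
    proof -
      have a1: "(x \<le> w!i) = (x < w!i)" using x wi by (metis le_neq_implies_less less_imp_le)
      have a2: "(k \<le> \<tau>!i) = (k < \<tau>!i)" using kt ti by (metis le_neq_implies_less less_imp_le)
      have r': "card {y\<in>set w. y < x} = k - 1" using r k_def by simp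
      have b1: "(x < w!i) = (k - 1 < card {y\<in>set w. y \<le> w!i})"
        using rank_cmp[of "set w" x "w!i"] x wi r' by simp
      have b2: "(k < \<tau>!i) = (k - 1 < card {y\<in>set \<tau>. y \<le> \<tau>!i})"
        using rank_cmp[of "set \<tau>" k "\<tau>!i"] kt ti ck by simp
      have a3: "(x < w!i) = (k < \<tau>!i)" using b1 b2 eqr by simp
      show ?thesis using a1 a2 a3 eqr by simp
    qed
    also have "\<dots> = card {y \<in> insert k (set \<tau>). y \<le> \<tau>!i}"
      using card_ins_filter[of "set \<tau>" k] kt by simp
    also have "\<dots> = card {y\<in>set \<sigma>. y \<le> \<sigma>!i}"
    proof -
      have hs: "set \<sigma> = insert k (set \<tau>)" using sd by simp
      have hn: "\<sigma>!i = \<tau>!i" using sd i' lt by (simp add: nth_append)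
      show ?thesis by (simp only: hs hn)
    qed
    also have "\<dots> = \<sigma>!i" using perm_card_le[OF p i] .
    finally show ?thesis .
  qed
qed

lemma sorted_rank:
  assumes s: "sorted_wrt (<) (s::nat list)" and i: "i < length s"
  shows "card {y\<in>set s. y \<le> s!i} = Suc (i::nat)"
proof -
  have eq: "{y\<in>set s. y \<le> s!i} = (\<lambda>j. s!j) ` {..i}"
  proof (intro equalityI subsetI)
    fix y assume "y \<in> {y\<in>set s. y \<le> s!i}"
    then obtain j where j: "j < length s" "y = s!j" "s!j \<le> s!i" by (auto simp: in_set_conv_nth)
    have "j \<le> i"
    proof (rule ccontr)
      assume "\<not> j \<le> i"
      then have "s!i < s!j" using sorted_wrt_nth_less[OF s, of i j] j by simp
      then show False using j(3) by linarith
    qed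
    then show "y \<in> (\<lambda>j. s!j) ` {..i}" using j by auto
  next
    fix y assume "y \<in> (\<lambda>j. s!j) ` {..i}"
    then obtain j where j: "j \<le> i" "y = s!j" by auto
    have "s!j \<le> s!i"
    proof (cases "j = i")
      case False
      then show ?thesis using sorted_wrt_nth_less[OF s, of j i] j i by simp
    qed simp
    then show "y \<in> {y\<in>set s. y \<le> s!i}" using j i by simp
  qed
  have d: "distinct s" using s strict_sorted_iff by blast
  have "inj_on (\<lambda>j. s!j) {..i}" using d i by (auto simp: inj_on_def nth_eq_iff_index_eq)
  then show ?thesis unfolding eq by (simp add: card_image)
qed

lemma below_iff:
  assumes s: "sorted_wrt (<) s" and x: "x \<notin> set s" and i: "i < length s"
  shows "(s!i < x) = (i < card {y\<in>set s. y < (x::nat)})"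
proof -
  have si: "s!i \<in> set s" using i by simp
  have ne: "s!i \<noteq> x" using x si by blast
  have "(x < s!i) = (card {y\<in>set s. y<x} < Suc i)"
    using rank_cmp[of "set s" x "s!i"] x si sorted_rank[OF s i] by simp
  then show ?thesis using ne by linarith
qed

lemma spacing_nth:
  "r \<le> length w \<Longrightarrow> spacing n w ! r = (0 # sort w @ [n+1]) ! Suc r - (0 # sort w @ [n+1]) ! r - 1"
  unfolding spacing_def Let_def by (simp add: nth_map nth_upt del: upt_Suc)

lemma c_Suc: "(0 # s @ [m]) ! Suc r = (if r < length s then s!r else (m::nat))" if "r \<le> length s"
  using that by (auto simp: nth_append)

lemma G2:
  assumes d: "distinct w" and wn: "set w \<subseteq> {1..n}" and xn: "x \<in> {1..n}" and x: "x \<notin> set w"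
  shows "spacing n w ! card {y\<in>set w. y < x} \<ge> 1"
proof -
  define s where "s = sort w"
  have ss: "sorted_wrt (<) s" unfolding s_def using d by (simp add: strict_sorted_iff)
  have sets: "set s = set w" and ls: "length s = length w" unfolding s_def by auto
  define r where "r = card {y\<in>set w. y < x}"
  have "r \<le> card (set w)" unfolding r_def by (rule card_mono) auto
  then have rk: "r \<le> length s" using d ls by (simp add: distinct_card)
  have xs: "x \<notin> set s" using x sets by simp
  have low: "(0 # s @ [n+1]) ! r < x"
  proof (cases r)
    case 0 then show ?thesis using xn by simp
  next
    case (Suc r')
    then have "s!r' < x" using below_iff[OF ss xs, of r'] rk sets r_def by simp
    then show ?thesis using Suc c_Suc[of r' s "n+1"] rk by simp
  qed
  have up: "x < (0 # s @ [n+1]) ! Suc r"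
  proof (cases "r < length s")
    case True
    then have "\<not> s!r < x" using below_iff[OF ss xs, of r] sets r_def by simp
    moreover have "s!r \<noteq> x" using True xs by (metis nth_mem)
    ultimately show ?thesis using c_Suc[of r s "n+1"] True by simp
  next
    case False
    then show ?thesis using c_Suc[of r s "n+1"] rk xn by simp
  qed
  show ?thesis using spacing_nth[of r w n] rk ls low up r_def s_def by simp
qed

lemma G1:
  assumes d: "distinct w" and wn: "set w \<subseteq> {1..n}" and rk: "r \<le> length w"
    and g: "spacing n w ! r \<ge> 1"
  shows "\<exists>x. x \<in> {1..n} \<and> x \<notin> set w \<and> card {y\<in>set w. y < x} = r"
proof -
  define s where "s = sort w"
  have ss: "sorted_wrt (<) s" unfolding s_def using d by (simp add: strict_sorted_iff)
  have so: "sorted s" using ss strict_sorted_iff by blast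
  have sets: "set s = set w" and ls: "length s = length w" unfolding s_def by auto
  define c where "c = 0 # s @ [n+1]"
  have gap: "c ! Suc r \<ge> c ! r + 2" using g spacing_nth[OF rk, of n] unfolding c_def s_def by simp
  define x where "x = c ! r + 1"
  have cr: "c ! r = s ! (r - 1)" if rp: "r > 0"
  proof -
    have e: "Suc (r - 1) = r" using rp by simp
    have l: "r - 1 < length s" using rk ls rp by linarith
    have "c ! Suc (r - 1) = s ! (r - 1)" unfolding c_def using c_Suc[of "r - 1" s "n+1"] l by simp
    then show ?thesis using e by simp
  qed
  have cs: "c ! Suc r = (if r < length s then s!r else n+1)" unfolding c_def using c_Suc[of r s "n+1"] rk ls by simp
  have xs: "x \<notin> set s"
  proof
    assume "x \<in> set s"
    then obtain j where j: "j < length s" "x = s!j" by (auto simp: in_set_conv_nth)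
    show False
    proof (cases "j < r")
      case True
      then have "s!j \<le> s!(r-1)" using sorted_nth_mono[OF so, of j "r-1"] rk ls j by simp
      then show False using cr True j x_def by simp
    next
      case False
      then have rl: "r < length s" using j by simp
      then have "s!r \<le> s!j" using sorted_nth_mono[OF so, of r j] False j by simp
      then show False using cs rl gap j x_def by simp
    qed
  qed
  have xle: "x \<le> n"
  proof (cases "r < length s")
    case True
    then have "s!r \<in> set w" using sets by (metis nth_mem)
    then have "s!r \<le> n" using wn by auto
    then show ?thesis using cs True gap x_def by simp
  next
    case False
    then show ?thesis using cs gap x_def by simp
  qed
  define m where "m = card {y\<in>set s. y < x}"
  have "m \<le> card (set s)" unfolding m_def by (rule card_mono) auto
  then have mk: "m \<le> length s" using ss strict_sorted_iff distinct_card by metis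
  have m1: "r \<le> m"
  proof (cases "r > 0")
    case True
    then have "s!(r-1) < x" using cr x_def by simp
    then have "r - 1 < m" using below_iff[OF ss xs, of "r-1"] rk ls True m_def by simp
    then show ?thesis by simp
  qed simp
  have m2: "m \<le> r"
  proof (cases "r < length s")
    case True
    then have "\<not> s!r < x" using cs gap x_def by simp
    then show ?thesis using below_iff[OF ss xs, of r] True m_def by simp
  next
    case False then show ?thesis using mk by simp
  qed
  show ?thesis using xs xle m1 m2 sets m_def by (intro exI[of _ x]) (auto simp: x_def)
qed

lemma dR1: "dR {1} (a # l) = map (\<lambda>x. if a < x then x - 1 else x) l"
proof -
  have u: "[0..<Suc (length l)] = 0 # map Suc [0..<length l]"
    by (simp add: map_Suc_upt upt_conv_Cons del: upt_Suc)
  have del: "[(a # l) ! i. i \<leftarrow> [0..<length (a # l)], i + 1 \<in> {1}] = [a]"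
    unfolding length_Cons u by simp
  have keep: "[(a # l) ! i. i \<leftarrow> [0..<length (a # l)], i + 1 \<notin> {1}] = l"
  proof -
    have "[(a # l) ! i. i \<leftarrow> [0..<length (a # l)], i + 1 \<notin> {1}] = map (\<lambda>i. l ! i) [0..<length l]"
      unfolding length_Cons u by (simp add: comp_def)
    then show ?thesis by (simp add: map_nth)
  qed
  show ?thesis unfolding dR_def Let_def del keep by (auto intro!: map_cong)
qed

lemma red_map:
  assumes g: "strict_mono_on A g" and M: "set M \<subseteq> A"
  shows "red (map g M) = red M"
proof -
  have le: "(g y \<le> g x) = (y \<le> x)" if "x \<in> A" "y \<in> A" for x y :: nat
    using g that by (metis linorder_not_le strict_mono_onD order_le_less)
  have "card {y \<in> g ` set M. y \<le> g x} = card {y\<in>set M. y \<le> x}" if x: "x \<in> set M" for x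
  proof -
    have "{y \<in> g ` set M. y \<le> g x} = g ` {y\<in>set M. y \<le> x}" using le x M by auto
    moreover have "inj_on g {y\<in>set M. y \<le> x}"
      using strict_mono_on_imp_inj_on[OF g] M by (auto intro: inj_on_subset)
    ultimately show ?thesis by (simp add: card_image)
  qed
  then show ?thesis unfolding red_def by simp
qed

lemma cv_map:
  assumes g: "strict_mono_on (set L) g"
  shows "contains_vinc (map g L) P \<longleftrightarrow> contains_vinc L P"
proof -
  have eq: "red (map (\<lambda>i. map g L ! i) is) = red (map (\<lambda>i. L ! i) is)"
    if "\<forall>i\<in>set is. i < length L" for "is"
  proof -
    have h1: "map (\<lambda>i. map g L ! i) is = map g (map (\<lambda>i. L ! i) is)" using that by simp
    have h2: "set (map (\<lambda>i. L ! i) is) \<subseteq> set L" using that by auto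
    show ?thesis unfolding h1 using red_map[OF g h2] .
  qed
  show ?thesis unfolding contains_vinc_def
    by (cases P) (simp, metis eq length_map)
qed

lemma cv_cons:
  assumes c: "contains_vinc L (\<sigma>, X)" and X: "X \<subseteq> {..<length \<sigma>}"
  shows "contains_vinc (a # L) (\<sigma>, X)"
proof -
  obtain "is" where i1: "length is = length \<sigma>" and i2: "sorted_wrt (<) is"
    and i3: "\<forall>i\<in>set is. i < length L" and i4: "red (map (\<lambda>i. L ! i) is) = \<sigma>"
    and i5: "\<forall>x\<in>X. is ! x = is ! (x - 1) + 1"
    using c unfolding contains_vinc_def by auto
  have a1: "map (\<lambda>i. (a # L) ! i) (map Suc is) = map (\<lambda>i. L ! i) is" by simp
  have a2: "sorted_wrt (<) (map Suc is)" using i2 by (simp add: sorted_wrt_map)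
  have a3: "\<forall>x\<in>X. map Suc is ! x = map Suc is ! (x - 1) + 1"
  proof
    fix x assume x: "x \<in> X"
    then have xl: "x < length is" "x - 1 < length is" using X i1 by auto
    then show "map Suc is ! x = map Suc is ! (x - 1) + 1" using i5 x by simp
  qed
  have a4: "\<forall>i\<in>set (map Suc is). i < length (a # L)" using i3 by simp
  have a5: "length (map Suc is) = length \<sigma>" using i1 by simp
  show ?thesis unfolding contains_vinc_def prod.case
    using a1 a2 a3 a4 a5 i4 by metis
qed

lemma cv_uncons:
  assumes i1: "length is = length \<sigma>" and i2: "sorted_wrt (<) is"
    and i3: "\<forall>i\<in>set is. i < length (a # L)" and i4: "red (map (\<lambda>i. (a # L) ! i) is) = \<sigma>"
    and i5: "\<forall>x\<in>X. is ! x = is ! (x - 1) + 1" and z: "0 \<notin> set is"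
    and X: "X \<subseteq> {..<length \<sigma>}"
  shows "contains_vinc L (\<sigma>, X)"
proof -
  define js where "js = map (\<lambda>i. i - 1) is"
  have "map (\<lambda>i. (a # L) ! i) is = map (\<lambda>i. L ! i) js"
    unfolding js_def using z by (auto simp: nth_Cons')
  moreover have "sorted_wrt (<) js" unfolding js_def sorted_wrt_map
  proof (rule sorted_wrt_mono_rel[OF _ i2])
    fix x y assume h: "x \<in> set is" "y \<in> set is" "x < y"
    have "x \<noteq> 0"
    proof
      assume "x = 0"
      then show False using h(1) z by simp
    qed
    then show "x - 1 < y - 1" using h(3) by linarith
  qed
  moreover have "\<forall>x\<in>X. js ! x = js ! (x - 1) + 1"
  proof
    fix x assume x: "x \<in> X"
    then have xl: "x < length is" "x - 1 < length is" using X i1 by auto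
    then have "is ! (x - 1) \<noteq> 0" using z by (metis nth_mem)
    then show "js ! x = js ! (x - 1) + 1" using i5 x xl unfolding js_def by simp
  qed
  moreover have "\<forall>i\<in>set js. i < length L"
  proof
    fix i assume "i \<in> set js"
    then obtain i0 where h: "i0 \<in> set is" "i = i0 - 1" by (auto simp: js_def)
    have "i0 < Suc (length L)" using i3 h by auto
    moreover have "i0 \<noteq> 0" using h z by (metis)
    ultimately show "i < length L" using h by linarith
  qed
  moreover have "length js = length \<sigma>" using i1 js_def by simp
  ultimately show ?thesis unfolding contains_vinc_def using i4
    by (auto intro!: exI[of _ js])
qed

lemma occ:
  assumes pn: "is_perm n \<pi>" and pre: "\<forall>i<length w. \<pi> ! i = w ! i"
    and lw: "length w = t - 1" and t: "t \<ge> 2" and xp: "x \<in> set \<pi>" and xw: "x \<notin> set w"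
    and r: "red (w @ [x]) = \<sigma>" and ls: "length \<sigma> = t"
  shows "contains_vinc \<pi> (\<sigma>, {1..t - 2})"
proof -
  obtain j where j: "j < length \<pi>" "\<pi> ! j = x" using xp by (auto simp: in_set_conv_nth)
  have jt: "j \<ge> t - 1"
  proof (rule ccontr)
    assume "\<not> t - 1 \<le> j"
    then have "\<pi> ! j = w ! j" using pre lw by simp
    then show False using xw j lw \<open>\<not> t - 1 \<le> j\<close> by (metis not_le nth_mem)
  qed
  define "is" where "is = [0..<t-1] @ [j]"
  have mw: "map (\<lambda>i. \<pi> ! i) [0..<t-1] = w"
    by (rule nth_equalityI) (use pre lw in auto)
  have "map (\<lambda>i. \<pi> ! i) is = w @ [x]" unfolding is_def using mw j by simp
  moreover have "sorted_wrt (<) is" unfolding is_def using jt by (auto simp: sorted_wrt_append)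
  moreover have "\<forall>i\<in>set is. i < length \<pi>" unfolding is_def using jt j by auto
  moreover have "length is = length \<sigma>" unfolding is_def using ls t by simp
  moreover have "\<forall>y\<in>{1..t-2}. is ! y = is ! (y - 1) + 1"
    unfolding is_def by (auto simp: nth_append)
  ultimately show ?thesis unfolding contains_vinc_def using r by (auto intro!: exI[of _ "is"])
qed

lemma gap_part:
  assumes t: "t \<ge> 2" and p: "is_perm t \<sigma>"
  shows "gap_vector (map (\<lambda>i. if i + 1 = \<sigma> ! (t - 1) then 1 else 0) [0..<t])
           (red (take (t - 1) \<sigma>)) {(\<sigma>, {1..t - 2})}"
proof -
  define v where "v = map (\<lambda>i. if i + 1 = \<sigma> ! (t - 1) then 1 else (0::nat)) [0..<t]"
  define pp where "pp = red (take (t - 1) \<sigma>)"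
  have ls: "length \<sigma> = t" using p by (simp add: is_perm_def)
  have kr: "\<sigma> ! (t - 1) \<in> {1..t}" using p ls t unfolding is_perm_def using nth_mem[of "t-1" \<sigma>] by simp
  define r where "r = \<sigma> ! (t - 1) - 1"
  have rt: "r < t" using kr r_def by auto
  have vr: "v ! r = 1" unfolding v_def r_def using rt kr r_def by simp
  have lp: "length pp = t - 1" unfolding pp_def using ls by simp
  have "gap_vector v pp {(\<sigma>, {1..t - 2})}" unfolding gap_vector_def
  proof (intro conjI allI impI)
    show "length v = length pp + 1" using lp t v_def by simp
    fix n w assume h: "adm_word n pp w \<and> (\<forall>i<length pp + 1. v ! i \<le> spacing n w ! i)"
    have lw: "length w = t - 1" and d: "distinct w" and wn: "set w \<subseteq> {1..n}" and rw: "red w = pp"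
      using h lp unfolding adm_word_def by auto
    have "v ! r \<le> spacing n w ! r" using h rt lp t by auto
    then have g: "spacing n w ! r \<ge> 1" using vr by simp
    obtain x where x: "x \<in> {1..n}" "x \<notin> set w" "card {y\<in>set w. y < x} = r"
      using G1[OF d wn _ g] rt lw by force
    have rs: "red (w @ [x]) = \<sigma>"
      using red_snoc[OF t p lw _ x(2)] rw pp_def x(3) r_def by simp
    show "SnB n {(\<sigma>, {1..t - 2})} pp w = {}"
    proof (rule equals0I)
      fix \<pi> assume "\<pi> \<in> SnB n {(\<sigma>, {1..t - 2})} pp w"
      then have pn: "is_perm n \<pi>" and av: "avoids {(\<sigma>, {1..t - 2})} \<pi>"
        and pre: "\<forall>i<length w. \<pi> ! i = w ! i" unfolding SnB_def by auto
      have xp: "x \<in> set \<pi>" using pn x(1) unfolding is_perm_def by simp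
      have "contains_vinc \<pi> (\<sigma>, {1..t - 2})" using occ[OF pn pre lw t xp x(2) rs ls] .
      then show False using av unfolding avoids_def by simp
    qed
  qed
  then show ?thesis unfolding v_def pp_def .
qed

lemma occ0:
  assumes dp: "distinct \<pi>" and pre: "\<forall>i<length w. \<pi> ! i = w ! i"
    and lw: "length w = t - 1" and t: "t \<ge> 2" and ls: "length \<sigma> = t"
    and i1: "length is = length \<sigma>" and i2: "sorted_wrt (<) is"
    and i3: "\<forall>i\<in>set is. i < length \<pi>" and i4: "red (map (\<lambda>i. \<pi> ! i) is) = \<sigma>"
    and i5: "\<forall>x\<in>{1..t-2}. is ! x = is ! (x - 1) + 1" and z: "0 \<in> set is"
  shows "\<exists>x\<in>set \<pi>. x \<notin> set w \<and> red (w @ [x]) = \<sigma>"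
proof -
  obtain j where j: "j < length is" "is ! j = 0" using z by (auto simp: in_set_conv_nth)
  have i0: "is ! 0 = 0"
  proof (cases j)
    case (Suc j')
    then have "is ! 0 < is ! j" using sorted_wrt_nth_less[OF i2, of 0 j] j by simp
    then show ?thesis using j by simp
  qed (use j in simp)
  have ii: "is ! i = i" if "i \<le> t - 2" for i
    using that
  proof (induction i)
    case 0 then show ?case using i0 by simp
  next
    case (Suc i)
    then have "Suc i \<in> {1..t-2}" by simp
    then have "is ! Suc i = is ! i + 1" using i5 by fastforce
    then show ?case using Suc by simp
  qed
  define jj where "jj = is ! (t - 1)"
  have "is ! (t - 2) < is ! (t - 1)" using sorted_wrt_nth_less[OF i2, of "t-2" "t-1"] i1 ls t by simp
  then have jt: "jj \<ge> t - 1" using ii[of "t-2"] jj_def t by simp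
  have jl: "jj < length \<pi>" using i3 i1 ls t jj_def by (metis diff_less nth_mem zero_less_one less_le_trans one_le_numeral)
  have mp: "map (\<lambda>i. \<pi> ! i) is = w @ [\<pi> ! jj]"
  proof (rule nth_equalityI)
    show "length (map (\<lambda>i. \<pi> ! i) is) = length (w @ [\<pi> ! jj])" using i1 ls lw t by simp
    fix i assume "i < length (map (\<lambda>i. \<pi> ! i) is)"
    then have il: "i < t" using i1 ls by simp
    show "map (\<lambda>i. \<pi> ! i) is ! i = (w @ [\<pi> ! jj]) ! i"
    proof (cases "i < t - 1")
      case True
      then have "is ! i = i" using ii by simp
      then show ?thesis using True il i1 ls lw pre by (simp add: nth_append)
    next
      case False
      then have "i = t - 1" using il by simp
      then show ?thesis using il i1 ls lw jj_def by (simp add: nth_append)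
    qed
  qed
  have xw: "\<pi> ! jj \<notin> set w"
  proof
    assume "\<pi> ! jj \<in> set w"
    then obtain i where i: "i < length w" "w ! i = \<pi> ! jj" by (auto simp: in_set_conv_nth)
    then have "\<pi> ! i = \<pi> ! jj" using pre by simp
    moreover have "i < length \<pi>" using i jl jt lw by simp
    ultimately have "i = jj" using dp jl by (simp add: nth_eq_iff_index_eq)
    then show False using i lw jt by simp
  qed
  show ?thesis using xw mp i4 jl by (intro bexI[of _ "\<pi> ! jj"]) auto
qed

lemma del_part:
  assumes t: "t \<ge> 2" and p: "is_perm t \<sigma>"
  shows "rev_deletable {1} (red (take (t - 1) \<sigma>)) {(\<sigma>, {1..t - 2})}"
  unfolding rev_deletable_def
proof (intro allI impI)
  define pp where "pp = red (take (t - 1) \<sigma>)"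
  define B where "B = {(\<sigma>, {1..t - 2})}"
  define v where "v = map (\<lambda>i. if i + 1 = \<sigma> ! (t - 1) then 1 else (0::nat)) [0..<t]"
  have gv: "gap_vector v pp B" using gap_part[OF t p] unfolding v_def pp_def B_def .
  have ls: "length \<sigma> = t" using p by (simp add: is_perm_def)
  have kr: "\<sigma> ! (t - 1) \<in> {1..t}" using p ls t unfolding is_perm_def using nth_mem[of "t-1" \<sigma>] by simp
  define r where "r = \<sigma> ! (t - 1) - 1"
  have rt: "r < t" using kr r_def by auto
  have vi: "v ! i = (if i = r then 1 else 0)" if "i < t" for i
    unfolding v_def r_def using that kr by auto
  have lp: "length pp = t - 1" unfolding pp_def using ls by simp
  fix n w assume h: "adm_word n (red (take (t - 1) \<sigma>)) w \<and>
      SnB n {(\<sigma>, {1..t - 2})} (red (take (t - 1) \<sigma>)) w \<noteq> {}"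
  then have adm: "adm_word n pp w" and ne: "SnB n B pp w \<noteq> {}" unfolding pp_def B_def by auto
  have lw: "length w = t - 1" and d: "distinct w" and wn: "set w \<subseteq> {1..n}" and rw: "red w = pp"
    using adm lp unfolding adm_word_def by auto
  have no_x: "\<not> (x \<in> {1..n} \<and> x \<notin> set w \<and> card {y\<in>set w. y < x} = r)" for x
  proof
    assume hx: "x \<in> {1..n} \<and> x \<notin> set w \<and> card {y\<in>set w. y < x} = r"
    then have g: "spacing n w ! r \<ge> 1" using G2[OF d wn, of x] by auto
    have "\<forall>i<length pp + 1. v ! i \<le> spacing n w ! i"
    proof (intro allI impI)
      fix i assume "i < length pp + 1"
      then have "i < t" using lp t by simp
      then show "v ! i \<le> spacing n w ! i" using vi g by simp
    qed
    then have "SnB n B pp w = {}" using gv adm unfolding gap_vector_def by blast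
    then show False using ne by simp
  qed
  obtain a w' where wa: "w = a # w'" using lw t by (cases w) auto
  have wlen: "length w \<le> n"
  proof -
    have "card (set w) \<le> card {1..n}" using wn by (rule card_mono[rotated]) simp
    then show ?thesis using d by (simp add: distinct_card)
  qed
  have an: "a \<in> {1..n}" using wn wa by simp
  have aw: "a \<notin> set w'" using d wa by simp
  have n1: "n \<ge> 1" using an by simp
  define f where "f = (\<lambda>x::nat. if a < x then x - 1 else x)"
  define g where "g = (\<lambda>y::nat. if a \<le> y then y + 1 else y)"
  have fg: "f (g y) = y" for y unfolding f_def g_def by simp
  have gf: "g (f y) = y" if "y \<noteq> a" for y unfolding f_def g_def using that by auto
  have ga: "g y \<noteq> a" for y unfolding g_def by auto
  have fmono: "strict_mono_on A f" if "a \<notin> A" for A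
  proof (rule strict_mono_onI)
    fix r s assume h: "r \<in> A" "s \<in> A" "r < s"
    then have ne: "r \<noteq> a" "s \<noteq> a" using that by auto
    show "f r < f s" unfolding f_def using h(3) ne by (auto split: if_splits)
  qed
  have gmono: "strict_mono_on A g" for A
    by (rule strict_mono_onI) (auto simp: g_def)
  have dRf: "dR {1} (a # l) = map f l" for l unfolding f_def by (rule dR1)
  have Bdef: "B = {(\<sigma>, {1..t - 2})}" by (rule B_def)
  have X: "{1..t-2} \<subseteq> {..<length \<sigma>}" using ls t by auto
  define S where "S = SnB n B pp w"
  define T where "T = SnB (n - card {1::nat}) B (dR {1} pp) (dR {1} w)"
  have T_eq: "T = SnB (n - 1) B (dR {1} pp) (map f w')" unfolding T_def wa dRf by simp
  have Sform: "\<pi> = a # tl \<pi> \<and> is_perm n \<pi> \<and> \<not> contains_vinc \<pi> (\<sigma>, {1..t - 2})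
        \<and> (\<forall>i<length w'. tl \<pi> ! i = w' ! i)" if "\<pi> \<in> S" for \<pi>
  proof -
    have pn: "is_perm n \<pi>" and av: "avoids B \<pi>" and pre: "\<forall>i<length w. \<pi> ! i = w ! i"
      using that unfolding S_def SnB_def by auto
    have "length \<pi> = n" using pn by (simp add: is_perm_def)
    then have "\<pi> \<noteq> []" using n1 by auto
    then have pa: "\<pi> = hd \<pi> # tl \<pi>" by simp
    have "hd \<pi> = a" using pre wa pa by (metis length_Cons nth_Cons_0 zero_less_Suc)
    then have pa': "\<pi> = a # tl \<pi>" using pa by simp
    have "\<forall>i<length w'. tl \<pi> ! i = w' ! i"
    proof (intro allI impI)
      fix i assume "i < length w'"
      then have "\<pi> ! Suc i = w ! Suc i" using pre wa by simp
      then show "tl \<pi> ! i = w' ! i" using wa pa' by (metis nth_Cons_Suc)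
    qed
    then show ?thesis using pa' pn av unfolding avoids_def Bdef by simp
  qed
  show "bij_betw (dR {1}) (SnB n {(\<sigma>, {1..t - 2})} (red (take (t - 1) \<sigma>)) w)
          (SnB (n - card {1}) {(\<sigma>, {1..t - 2})} (dR {1} (red (take (t - 1) \<sigma>))) (dR {1} w))"
  proof -
    have h1: "\<forall>\<pi>\<in>S. a # map g (dR {1} \<pi>) = \<pi>"
    proof
      fix \<pi> assume "\<pi> \<in> S"
      then have sf: "\<pi> = a # tl \<pi>" "is_perm n \<pi>" using Sform by auto
      then have na: "a \<notin> set (tl \<pi>)" unfolding is_perm_def by (metis distinct.simps(2))
      have "map g (map f (tl \<pi>)) = tl \<pi>" unfolding map_map
      proof (rule map_idI)
        fix y assume "y \<in> set (tl \<pi>)"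
        then have "y \<noteq> a" using na by auto
        then show "(g \<circ> f) y = y" using gf by simp
      qed
      then show "a # map g (dR {1} \<pi>) = \<pi>" using sf dRf by metis
    qed
    have h2: "\<forall>\<rho>\<in>T. dR {1} ((\<lambda>\<rho>. a # map g \<rho>) \<rho>) = \<rho>"
      unfolding dRf by (simp add: fg map_idI)
    have h3: "dR {1} ` S \<subseteq> T"
    proof
      fix \<rho> assume "\<rho> \<in> dR {1} ` S"
      then obtain \<pi> where pS: "\<pi> \<in> S" and rho: "\<rho> = dR {1} \<pi>" by auto
      define \<pi>' where "\<pi>' = tl \<pi>"
      have sf: "\<pi> = a # \<pi>'" "is_perm n \<pi>" "\<not> contains_vinc \<pi> (\<sigma>, {1..t - 2})"
        "\<forall>i<length w'. \<pi>' ! i = w' ! i" using Sform[OF pS] \<pi>'_def by auto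
      have rho': "\<rho> = map f \<pi>'" using rho sf dRf by simp
      have P: "is_perm n (a # \<pi>')" using sf(1,2) by simp
      then have P1: "length (a # \<pi>') = n" and P2: "distinct (a # \<pi>')" and P3: "set (a # \<pi>') \<subseteq> {1..n}"
        unfolding perm_iff by auto
      have ap: "a \<notin> set \<pi>'" and dp': "distinct \<pi>'" using P2 by auto
      have lp': "length \<pi>' = n - 1" using P1 by simp
      have sp': "set \<pi>' \<subseteq> {1..n}" using P3 by simp
      have fm: "strict_mono_on (set \<pi>') f" using fmono ap by blast
      have "is_perm (n - 1) \<rho>" unfolding perm_iff
      proof (intro conjI)
        show "length \<rho> = n - 1" using rho' lp' by simp
        show "distinct \<rho>" unfolding rho' using dp' strict_mono_on_imp_inj_on[OF fm]
          by (simp add: distinct_map)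
        show "set \<rho> \<subseteq> {1..n - 1}"
        proof
          fix y assume "y \<in> set \<rho>"
          then obtain z where z: "z \<in> set \<pi>'" "y = f z" using rho' by auto
          then have "z \<in> {1..n}" "z \<noteq> a" using sp' ap by auto
          then show "y \<in> {1..n - 1}" using z an unfolding f_def by auto
        qed
      qed
      moreover have "\<not> contains_vinc \<rho> (\<sigma>, {1..t - 2})"
      proof
        assume "contains_vinc \<rho> (\<sigma>, {1..t - 2})"
        then have "contains_vinc \<pi>' (\<sigma>, {1..t - 2})" using cv_map[OF fm] rho' by simp
        then have "contains_vinc \<pi> (\<sigma>, {1..t - 2})" using cv_cons[OF _ X] sf(1) by simp
        then show False using sf(3) by simp
      qed
      moreover have "\<forall>i<length (map f w'). \<rho> ! i = map f w' ! i"
      proof (intro allI impI)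
        fix i assume "i < length (map f w')"
        then have i: "i < length w'" "i < length \<pi>'" using wlen wa lp' by auto
        then show "\<rho> ! i = map f w' ! i" using sf(4) rho' by simp
      qed
      ultimately show "\<rho> \<in> T" unfolding T_eq SnB_def avoids_def Bdef by simp
    qed
    have h4: "(\<lambda>\<rho>. a # map g \<rho>) ` T \<subseteq> S"
    proof
      fix \<pi> assume "\<pi> \<in> (\<lambda>\<rho>. a # map g \<rho>) ` T"
      then obtain \<rho> where rT: "\<rho> \<in> T" and pi: "\<pi> = a # map g \<rho>" by auto
      have rp: "is_perm (n - 1) \<rho>" and rav: "\<not> contains_vinc \<rho> (\<sigma>, {1..t - 2})"
        and rpre: "\<forall>i<length (map f w'). \<rho> ! i = map f w' ! i"
        using rT unfolding T_eq SnB_def avoids_def Bdef by auto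
      have lr: "length \<rho> = n - 1" and dr: "distinct \<rho>" and sr: "set \<rho> \<subseteq> {1..n-1}"
        using rp unfolding perm_iff by auto
      have pn: "is_perm n \<pi>" unfolding perm_iff
      proof (intro conjI)
        show "length \<pi> = n" using pi lr n1 by simp
        have "a \<notin> set (map g \<rho>)" using ga by auto
        moreover have "distinct (map g \<rho>)" using dr strict_mono_on_imp_inj_on[OF gmono]
          by (simp add: distinct_map)
        ultimately show "distinct \<pi>" using pi by simp
        have "set (map g \<rho>) \<subseteq> {1..n}"
        proof
          fix y assume "y \<in> set (map g \<rho>)"
          then obtain z where z: "z \<in> set \<rho>" "y = g z" by auto
          then have "z \<in> {1..n-1}" using sr by auto
          then show "y \<in> {1..n}" using z an unfolding g_def by auto
        qed
        then show "set \<pi> \<subseteq> {1..n}" using pi an by simp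
      qed
      have pre: "\<forall>i<length w. \<pi> ! i = w ! i"
      proof (intro allI impI)
        fix i assume il: "i < length w"
        show "\<pi> ! i = w ! i"
        proof (cases i)
          case 0 then show ?thesis using pi wa by simp
        next
          case (Suc i')
          then have i': "i' < length w'" using il wa by simp
          then have "\<rho> ! i' = f (w' ! i')" using rpre by simp
          moreover have "w' ! i' \<noteq> a" using aw i' by (metis nth_mem)
          moreover have "i' < length \<rho>" using i' wlen wa lr by simp
          ultimately show ?thesis using pi wa Suc gf by simp
        qed
      qed
      have "\<not> contains_vinc \<pi> (\<sigma>, {1..t - 2})"
      proof
        assume "contains_vinc \<pi> (\<sigma>, {1..t - 2})"
        then obtain "is" where i1: "length is = length \<sigma>" and i2: "sorted_wrt (<) is"
          and i3: "\<forall>i\<in>set is. i < length \<pi>" and i4: "red (map (\<lambda>i. \<pi> ! i) is) = \<sigma>"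
          and i5: "\<forall>x\<in>{1..t-2}. is ! x = is ! (x - 1) + 1"
          unfolding contains_vinc_def by auto
        show False
        proof (cases "0 \<in> set is")
          case True
          have dpi: "distinct \<pi>" using pn unfolding perm_iff by simp
          obtain x where x: "x \<in> set \<pi>" "x \<notin> set w" "red (w @ [x]) = \<sigma>"
            using occ0[OF dpi pre lw t ls i1 i2 i3 i4 i5 True] by blast
          have "red (w @ [x]) ! length w = \<sigma> ! (t - 1)" using x(3) lw by simp
          then have "card {y\<in>set w. y < x} = r" using red_snoc_last[OF x(2)] r_def by simp
          moreover have "x \<in> {1..n}" using x(1) pn unfolding perm_iff by auto
          ultimately show False using no_x x(2) by blast
        next
          case False
          have "contains_vinc (map g \<rho>) (\<sigma>, {1..t - 2})"
            by (rule cv_uncons[OF i1 i2 _ _ i5 False X]) (use i3 i4 pi in simp_all)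
          then have "contains_vinc \<rho> (\<sigma>, {1..t - 2})" using cv_map[OF gmono] by simp
          then show False using rav by simp
        qed
      qed
      then show "\<pi> \<in> S" unfolding S_def SnB_def avoids_def Bdef using pn pre by simp
    qed
    have "bij_betw (dR {1}) S T" by (rule bij_betw_byWitness[OF h1 h2 h3 h4])
    then show ?thesis by (simp add: S_def T_def pp_def B_def)
  qed
qed


theorem mainTheorem6:
  fixes t :: nat and \<sigma> :: "nat list"
  assumes "t \<ge> 2" and "is_perm t \<sigma>"
  defines "p \<equiv> red (take (t - 1) \<sigma>)"
      and "v \<equiv> map (\<lambda>i. if i + 1 = \<sigma> ! (t - 1) then 1 else 0) [0..<t]"
      and "B \<equiv> {(\<sigma>, {1..t - 2})}"
  shows "gap_vector v p B \<and> rev_deletable {1} p B"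
    unfolding p_def v_def B_def using gap_part[OF assms(1,2)] del_part[OF assms(1,2)] by simp

end
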